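(* Consider the FedPBC algorithm described in the context with constant learning rate $\eta$ and $s\ge1$ local steps. Suppose Assumptions (A1), (A2) and (A4) hold, $L\ge1$, and $\eta\le\frac{1}{108L^2s^3(\beta^2+1)(1+\kappa^2L^2)}$. Then for every round $t$, $$\mathbb{E}\left[F(\bar x^{t+1})-F(\bar x^t)\mid\mathcal{F}^t\right]\le-\frac{\eta s}{3}\|\nabla F(\bar x^t)\|^2+\eta s\frac{L^2}{m}\sum_{i=1}^m\|x_i^t-\bar x^t\|^2+6\eta^2s^2L(\zeta^2+\sigma^2)(1+\kappa^2L^2).$$
   Context: Federated learning problem: $m$ clients minimize $F(x)=\frac1m\sum_{i=1}^m F_i(x)$ over $x\in\mathbb{R}^d$, where $F_i(x)=\mathbb{E}_{\xi\sim\mathcal{D}_i}[\ell_i(x;\xi)]$. FedPBC algorithm: fix $s\ge1$, learning rate $\eta>0$ and initial point $x^0$; every client starts with $x_i^0=x^0$. In each round $t$: every client $i$ sets $x_i^{(t,0)}=x_i^t$ and performs $x_i^{(t,k+1)}=x_i^{(t,k)}-\eta\nabla\ell_i(x_i^{(t,k)};\xi_i^t)$ for $k=0,\dots,s-1$ ($\xi_i^t$ a random sample drawn in round $t$), and sets $x_i^{t\star}=x_i^{(t,s)}$. A random set $\mathcal{A}^t\subseteq[m]$ of clients has active uplinks in round $t$ (client $i$ active with unknown, possibly time-varying probability $p_i^t\ge c>0$). If $\mathcal{A}^t\neq\emptyset$ the server sets $x^{t+1}=\frac{1}{|\mathcal{A}^t|}\sum_{i\in\mathcal{A}^t}x_i^{t\star}$,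 else $x^{t+1}=x^t$; clients $i\in\mathcal{A}^t$ set $x_i^{t+1}=x^{t+1}$, clients $i\notin\mathcal{A}^t$ set $x_i^{t+1}=x_i^{t\star}$. Let $\bar x^t=\frac1m\sum_i x_i^t$ and $\mathcal{F}^t$ the sigma-algebra generated by all randomness up to round $t$. $\kappa=\max_i\frac{(1+\eta L_i)^s-1-s\eta L_i}{\binom{s}{2}(\eta L_i)^2}$ for $s\ge2$, $\kappa=0$ for $s=1$. (A1) For each $i$ and every sample $\xi$, $x\mapsto\nabla\ell_i(x;\xi)$ is $L_i$-Lipschitz; $L:=\max_iL_i$. (A2) $\mathbb{E}[\nabla\ell_i(x_i^t;\xi_i^t)\mid\mathcal{F}^t]=\nabla F_i(x_i^t)$ and $\mathbb{E}[\|\nabla\ell_i(x;\xi_i^t)-\nabla F_i(x)\|^2\mid\mathcal{F}^t]\le\sigma^2$ for all $x,i$. (A4) For some $\beta,\zeta\ge0$ and all $x$: $\frac1m\sum_i\|\nabla F_i(x)-\nabla F(x)\|^2\le\beta^2\|\nabla F(x)\|^2+\zeta^2$. *)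

theory Defs
  imports "HOL-Probability.Probability"
begin

text \<open>Clients are indexed by \<open>{..<m}\<close>. Vectors live in a Euclidean space \<open>'a\<close> (i.e. R^d).\<close>

definition local_obj :: "(nat \<Rightarrow> 's measure) \<Rightarrow> (nat \<Rightarrow> 'a \<Rightarrow> 's \<Rightarrow> real) \<Rightarrow> nat \<Rightarrow> 'a \<Rightarrow> real" where
  "local_obj D l i x = (\<integral>\<xi>. l i x \<xi> \<partial>D i)"

definition global_obj :: "nat \<Rightarrow> (nat \<Rightarrow> 's measure) \<Rightarrow> (nat \<Rightarrow> 'a \<Rightarrow> 's \<Rightarrow> real) \<Rightarrow> 'a \<Rightarrow> real" where
  "global_obj m D l x = (1 / real m) * (\<Sum>i<m. local_obj D l i x)"

text \<open>Gradient of the global objective, from the gradients \<open>gF i x = \<nabla>F_i(x)\<close>.\<close>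
definition global_grad :: "nat \<Rightarrow> (nat \<Rightarrow> 'a \<Rightarrow> 'a::real_vector) \<Rightarrow> 'a \<Rightarrow> 'a" where
  "global_grad m gF x = (1 / real m) *\<^sub>R (\<Sum>i<m. gF i x)"

definition avg :: "nat \<Rightarrow> (nat \<Rightarrow> 'a::real_vector) \<Rightarrow> 'a" where
  "avg m x = (1 / real m) *\<^sub>R (\<Sum>i<m. x i)"

definition local_steps :: "(nat \<Rightarrow> 'a \<Rightarrow> 's \<Rightarrow> 'a::real_vector) \<Rightarrow> real \<Rightarrow> nat \<Rightarrow> 's \<Rightarrow> nat \<Rightarrow> 'a \<Rightarrow> 'a" where
  "local_steps gl \<eta> i \<xi> k x = ((\<lambda>y. y - \<eta> *\<^sub>R gl i y \<xi>) ^^ k) x"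

definition server_update :: "'a \<Rightarrow> nat set \<Rightarrow> (nat \<Rightarrow> 'a::real_vector) \<Rightarrow> 'a" where
  "server_update xsrv A xstar =
     (if A = {} then xsrv else (1 / real (card A)) *\<^sub>R (\<Sum>i\<in>A. xstar i))"

definition client_update :: "'a \<Rightarrow> nat set \<Rightarrow> (nat \<Rightarrow> 'a::real_vector) \<Rightarrow> nat \<Rightarrow> 'a" where
  "client_update xsrv A xstar i =
     (if i \<in> A then server_update xsrv A xstar else xstar i)"

definition kappa :: "nat \<Rightarrow> (nat \<Rightarrow> real) \<Rightarrow> real \<Rightarrow> nat \<Rightarrow> real" where
  "kappa m Li \<eta> s =
     (if s = 1 then 0
      else Max ((\<lambda>i. ((1 + \<eta> * Li i) ^ s - 1 - real s * \<eta> * Li i)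
                      / (real (s choose 2) * (\<eta> * Li i)\<^sup>2)) ` {..<m}))"

end

theory Submission
  imports Defs
begin


lemma quad_bound:
  fixes f :: "'a::euclidean_space \<Rightarrow> real" and g :: "'a \<Rightarrow> 'a"
  assumes der: "\<And>v. (f has_derivative (\<lambda>h. g v \<bullet> h)) (at v)"
    and lip: "\<And>v w. norm (g v - g w) \<le> K * norm (v - w)"
  shows "\<bar>f (y + h) - f y - g y \<bullet> h\<bar> \<le> K * (norm h)\<^sup>2"
proof -
  define S where "S = {y + t *\<^sub>R h | t. t \<in> {0..1::real}}"
  have "norm (f (y + h) - f y - (\<lambda>h. g y \<bullet> h) (y + h - y)) \<le> norm (y + h - y) * (K * norm h)"
  proof (rule differentiable_bound_linearization[where S=S and f'="\<lambda>v h. g v \<bullet> h"])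
    show "\<And>t. t \<in> {0..1} \<Longrightarrow> y + t *\<^sub>R (y + h - y) \<in> S" using S_def by auto
    show "\<And>x. x \<in> S \<Longrightarrow> (f has_derivative (\<lambda>h. g x \<bullet> h)) (at x within S)"
      using der has_derivative_at_withinI by blast
    show "y \<in> S" unfolding S_def by (auto intro!: exI[where x=0])
    fix x assume "x \<in> S"
    then obtain t where t: "t \<in> {0..1}" "x = y + t *\<^sub>R h" unfolding S_def by auto
    have nx: "norm (x - y) \<le> norm h" using t by (auto simp: mult_left_le_one_le)
    show "onorm ((\<lambda>h. g x \<bullet> h) - (\<lambda>h. g y \<bullet> h)) \<le> K * norm h"
    proof (rule onorm_le)
      fix u
      have "norm (((\<lambda>h. g x \<bullet> h) - (\<lambda>h. g y \<bullet> h)) u) = \<bar>(g x - g y) \<bullet> u\<bar>"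
        by (simp add: inner_diff_left)
      also have "\<dots> \<le> norm (g x - g y) * norm u" by (rule Cauchy_Schwarz_ineq2)
      also have "\<dots> \<le> K * norm (x - y) * norm u" using lip by (simp add: mult_right_mono)
      also have "\<dots> \<le> K * norm h * norm u"
      proof (cases "h = 0")
        case True
        then show ?thesis using nx by simp
      next
        case False
        have "0 \<le> K * norm h" using lip[of "y+h" y] norm_ge_zero[of "g (y+h) - g y"] by (metis add_diff_cancel_left' order_trans)
        then have "K \<ge> 0" using False by (simp add: zero_le_mult_iff)
        then show ?thesis using nx by (simp add: mult_left_mono mult_right_mono)
      qed
      finally show "norm (((\<lambda>h. g x \<bullet> h) - (\<lambda>h. g y \<bullet> h)) u) \<le> K * norm h * norm u" .
    qed
  qed
  then show ?thesis by (simp add: power2_eq_square mult_ac)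
qed

lemma obj_smooth:
  fixes Dm :: "'s measure" and lf :: "'a::euclidean_space \<Rightarrow> 's \<Rightarrow> real"
    and glf :: "'a \<Rightarrow> 's \<Rightarrow> 'a" and Fg :: "'a \<Rightarrow> 'a"
  assumes P: "prob_space Dm"
    and int: "\<And>y. integrable Dm (\<lambda>z. lf y z)"
    and der: "\<And>z y. ((\<lambda>v. lf v z) has_derivative (\<lambda>h. glf y z \<bullet> h)) (at y)"
    and lip: "\<And>z y y'. norm (glf y z - glf y' z) \<le> K * norm (y - y')"
    and Fder: "\<And>y. ((\<lambda>y. \<integral>z. lf y z \<partial>Dm) has_derivative (\<lambda>h. Fg y \<bullet> h)) (at y)"
  shows "norm (Fg y - Fg y') \<le> K * norm (y - y')"
proof -
  interpret prob_space Dm by (rule P)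
  define Fo where "Fo = (\<lambda>y. \<integral>z. lf y z \<partial>Dm)"
  have quad: "\<bar>lf (y + h) z - lf y z - glf y z \<bullet> h\<bar> \<le> K * (norm h)\<^sup>2" for y h z
    by (rule quad_bound[where f="\<lambda>v. lf v z" and g="\<lambda>v. glf v z"]) (use der lip in auto)
  have meas: "(\<lambda>z. glf y z \<bullet> h) \<in> borel_measurable Dm" for y h
  proof (rule borel_measurable_LIMSEQ_real[where u="\<lambda>n z. real (Suc n) * (lf (y + (1 / real (Suc n)) *\<^sub>R h) z - lf y z)"])
    show "(\<lambda>z. real (Suc n) * (lf (y + (1 / real (Suc n)) *\<^sub>R h) z - lf y z)) \<in> borel_measurable Dm" for n
      using int by (intro borel_measurable_times borel_measurable_diff) auto
    fix z
    have "(\<lambda>n. real (Suc n) * (lf (y + (1 / real (Suc n)) *\<^sub>R h) z - lf y z) - glf y z \<bullet> h) \<longlonglongrightarrow> 0"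
    proof (rule Lim_null_comparison)
      show "(\<lambda>n. K * (norm h)\<^sup>2 / real (Suc n)) \<longlonglongrightarrow> 0"
        using tendsto_mult_right_zero[OF LIMSEQ_inverse_real_of_nat, of "K * (norm h)\<^sup>2"] by (simp add: divide_inverse)
      show "\<forall>\<^sub>F n in sequentially. norm (real (Suc n) * (lf (y + (1 / real (Suc n)) *\<^sub>R h) z - lf y z) - glf y z \<bullet> h) \<le> K * (norm h)\<^sup>2 / real (Suc n)"
      proof (intro always_eventually allI)
        fix n
        define t where "t = 1 / real (Suc n)"
        have tp: "t > 0" and tn: "real (Suc n) * t = 1" unfolding t_def by auto
        have "real (Suc n) * (lf (y + t *\<^sub>R h) z - lf y z) - glf y z \<bullet> h
            = real (Suc n) * (lf (y + t *\<^sub>R h) z - lf y z - glf y z \<bullet> (t *\<^sub>R h))"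
        proof -
          have "real (Suc n) * (glf y z \<bullet> (t *\<^sub>R h)) = glf y z \<bullet> h"
            by (metis inner_scaleR_right mult.assoc mult_1 tn)
          then show ?thesis by (simp add: right_diff_distrib)
        qed
        then have "norm (real (Suc n) * (lf (y + t *\<^sub>R h) z - lf y z) - glf y z \<bullet> h)
             = real (Suc n) * \<bar>lf (y + t *\<^sub>R h) z - lf y z - glf y z \<bullet> (t *\<^sub>R h)\<bar>"
          by (simp add: abs_mult)
        also have "\<dots> \<le> real (Suc n) * (K * (norm (t *\<^sub>R h))\<^sup>2)"
          by (intro mult_left_mono quad) auto
        also have "\<dots> = K * (norm h)\<^sup>2 * (real (Suc n) * t) * t"
          using tp by (simp add: power2_eq_square)
        also have "\<dots> = K * (norm h)\<^sup>2 / real (Suc n)" using tn by (simp add: t_def)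
        finally show "norm (real (Suc n) * (lf (y + (1 / real (Suc n)) *\<^sub>R h) z - lf y z) - glf y z \<bullet> h) \<le> K * (norm h)\<^sup>2 / real (Suc n)"
          by (simp add: t_def)
      qed
    qed
    then show "(\<lambda>n. real (Suc n) * (lf (y + (1 / real (Suc n)) *\<^sub>R h) z - lf y z)) \<longlonglongrightarrow> glf y z \<bullet> h"
      using Lim_null by blast
  qed
  have igl: "integrable Dm (\<lambda>z. glf y z \<bullet> h)" for y h
  proof (rule Bochner_Integration.integrable_bound[where f="\<lambda>z. \<bar>lf (y + h) z - lf y z\<bar> + K * (norm h)\<^sup>2"])
    show "integrable Dm (\<lambda>z. \<bar>lf (y + h) z - lf y z\<bar> + K * (norm h)\<^sup>2)"
      using int by auto
    show "(\<lambda>z. glf y z \<bullet> h) \<in> borel_measurable Dm" by (rule meas)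
    show "AE z in Dm. norm (glf y z \<bullet> h) \<le> norm (\<bar>lf (y + h) z - lf y z\<bar> + K * (norm h)\<^sup>2)"
    proof (intro AE_I2)
      fix z
      have "0 \<le> K * (norm h)\<^sup>2" using quad[of y h z] by linarith
      then show "norm (glf y z \<bullet> h) \<le> norm (\<bar>lf (y + h) z - lf y z\<bar> + K * (norm h)\<^sup>2)"
        using quad[of y h z] by auto
    qed
  qed
  have key: "\<bar>Fo (y + h) - Fo y - (\<integral>z. glf y z \<bullet> h \<partial>Dm)\<bar> \<le> K * (norm h)\<^sup>2" for y h
  proof -
    have "Fo (y + h) - Fo y - (\<integral>z. glf y z \<bullet> h \<partial>Dm) = (\<integral>z. lf (y + h) z - lf y z - glf y z \<bullet> h \<partial>Dm)"
      unfolding Fo_def using int igl by (simp add: integral_diff)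
    also have "\<bar>\<dots>\<bar> \<le> (\<integral>z. \<bar>lf (y + h) z - lf y z - glf y z \<bullet> h\<bar> \<partial>Dm)"
      by (rule integral_abs_bound)
    also have "\<dots> \<le> (\<integral>z. K * (norm h)\<^sup>2 \<partial>Dm)"
      using int igl quad by (intro integral_mono) auto
    also have "\<dots> = K * (norm h)\<^sup>2" by (simp add: prob_space)
    finally show ?thesis .
  qed
  have ident: "Fg y \<bullet> h = (\<integral>z. glf y z \<bullet> h \<partial>Dm)" for y h
  proof -
    define c where "c = (\<integral>z. glf y z \<bullet> h \<partial>Dm)"
    have d1: "((\<lambda>t. Fo (y + t *\<^sub>R h)) has_derivative (\<lambda>t. Fg y \<bullet> (t *\<^sub>R h))) (at 0)"
    proof -
      have "((\<lambda>t::real. y + t *\<^sub>R h) has_derivative (\<lambda>t. t *\<^sub>R h)) (at 0)"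
        by (auto intro!: derivative_eq_intros)
      from has_derivative_compose[OF this, of Fo "\<lambda>h. Fg y \<bullet> h"] show ?thesis
        using Fder[of y] unfolding Fo_def by simp
    qed
    have d2: "((\<lambda>t. Fo (y + t *\<^sub>R h)) has_derivative (\<lambda>t. t * c)) (at 0)"
      unfolding has_derivative_at
    proof
      show "bounded_linear (\<lambda>t::real. t * c)" by (rule bounded_linear_mult_left)
      show "(\<lambda>t. norm (Fo (y + (0 + t) *\<^sub>R h) - Fo (y + 0 *\<^sub>R h) - t * c) / norm t) \<midarrow>0\<rightarrow> 0"
      proof (rule Lim_null_comparison)
        show "(\<lambda>t::real. K * (norm h)\<^sup>2 * \<bar>t\<bar>) \<midarrow>0\<rightarrow> 0"
          by (auto intro!: tendsto_eq_intros)
        show "\<forall>\<^sub>F t in at 0. norm (norm (Fo (y + (0 + t) *\<^sub>R h) - Fo (y + 0 *\<^sub>R h) - t * c) / norm t) \<le> K * (norm h)\<^sup>2 * \<bar>t\<bar>"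
        proof (intro always_eventually allI)
          fix t :: real
          have ct: "(\<integral>z. glf y z \<bullet> (t *\<^sub>R h) \<partial>Dm) = t * c" unfolding c_def by simp
          have "\<bar>Fo (y + t *\<^sub>R h) - Fo y - t * c\<bar> \<le> K * (norm (t *\<^sub>R h))\<^sup>2"
            using key[of y "t *\<^sub>R h"] ct by (cases "t = 0") (simp_all add: c_def)
          also have "\<dots> = (K * (norm h)\<^sup>2 * \<bar>t\<bar>) * \<bar>t\<bar>" by (simp add: power2_eq_square)
          finally have b: "\<bar>Fo (y + t *\<^sub>R h) - Fo y - t * c\<bar> \<le> (K * (norm h)\<^sup>2 * \<bar>t\<bar>) * \<bar>t\<bar>" .
          show "norm (norm (Fo (y + (0 + t) *\<^sub>R h) - Fo (y + 0 *\<^sub>R h) - t * c) / norm t) \<le> K * (norm h)\<^sup>2 * \<bar>t\<bar>"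
          proof (cases "t = 0")
            case True then show ?thesis by simp
          next
            case False
            then show ?thesis using b by (simp add: divide_le_eq)
          qed
        qed
      qed
    qed
    have "(\<lambda>t. Fg y \<bullet> (t *\<^sub>R h)) = (\<lambda>t. t * c)" by (rule has_derivative_unique[OF d1 d2])
    from fun_cong[OF this, of 1] show ?thesis unfolding c_def by simp
  qed
  have "(norm (Fg y - Fg y'))\<^sup>2 = (Fg y - Fg y') \<bullet> (Fg y - Fg y')" by (simp add: power2_norm_eq_inner)
  also have "\<dots> = (\<integral>z. (glf y z - glf y' z) \<bullet> (Fg y - Fg y') \<partial>Dm)"
    using ident[of y "Fg y - Fg y'"] ident[of y' "Fg y - Fg y'"] igl
    by (simp add: inner_diff_left integral_diff)
  also have "\<dots> \<le> (\<integral>z. K * norm (y - y') * norm (Fg y - Fg y') \<partial>Dm)"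
  proof (rule integral_mono)
    show "integrable Dm (\<lambda>z. (glf y z - glf y' z) \<bullet> (Fg y - Fg y'))"
      using igl by (simp add: inner_diff_left)
    show "integrable Dm (\<lambda>z. K * norm (y - y') * norm (Fg y - Fg y'))" by simp
    fix z
    have "(glf y z - glf y' z) \<bullet> (Fg y - Fg y') \<le> norm (glf y z - glf y' z) * norm (Fg y - Fg y')"
      by (rule norm_cauchy_schwarz)
    also have "\<dots> \<le> K * norm (y - y') * norm (Fg y - Fg y')"
      using lip by (simp add: mult_right_mono)
    finally show "(glf y z - glf y' z) \<bullet> (Fg y - Fg y') \<le> K * norm (y - y') * norm (Fg y - Fg y')" .
  qed
  also have "\<dots> = K * norm (y - y') * norm (Fg y - Fg y')" by (simp add: prob_space)
  finally have "norm (Fg y - Fg y') * norm (Fg y - Fg y') \<le> K * norm (y - y') * norm (Fg y - Fg y')"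
    by (simp add: power2_eq_square)
  then show ?thesis
    by (cases "Fg y = Fg y'") (auto simp: mult_le_cancel_right intro: order_trans[OF norm_ge_zero lip])
qed



lemma steps_bound:
  fixes G :: "'a \<Rightarrow> 'a::real_normed_vector"
  assumes lip: "\<And>v w. norm (G v - G w) \<le> K * norm (v - w)"
    and K: "0 \<le> K" and eta: "0 \<le> \<eta>" and small: "2 * \<eta> * K * real s \<le> 1"
  shows "k \<le> s \<Longrightarrow> norm (((\<lambda>y. y - \<eta> *\<^sub>R G y) ^^ k) x - x) \<le> 2 * \<eta> * real k * norm (G x)
     \<and> norm (((\<lambda>y. y - \<eta> *\<^sub>R G y) ^^ k) x - (x - (\<eta> * real k) *\<^sub>R G x)) \<le> 2 * \<eta>\<^sup>2 * K * (real k)\<^sup>2 * norm (G x)"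
proof (induction k)
  case 0
  then show ?case by simp
next
  case (Suc k)
  define y where "y = ((\<lambda>y. y - \<eta> *\<^sub>R G y) ^^ k) x"
  define a where "a = norm (G x)"
  have a0: "0 \<le> a" unfolding a_def by simp
  from Suc have IH1: "norm (y - x) \<le> 2 * \<eta> * real k * a"
    and IH2: "norm (y - (x - (\<eta> * real k) *\<^sub>R G x)) \<le> 2 * \<eta>\<^sup>2 * K * (real k)\<^sup>2 * a"
    unfolding y_def a_def by auto
  have ks: "2 * \<eta> * K * real k \<le> 1"
    using Suc.prems small by (smt (verit) K eta mult_left_mono of_nat_le_iff Suc_leD mult_nonneg_nonneg)
  have Gy: "norm (G y - G x) \<le> K * (2 * \<eta> * real k * a)"
    using lip[of y x] IH1 K by (meson mult_left_mono order_trans)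
  have st: "((\<lambda>y. y - \<eta> *\<^sub>R G y) ^^ Suc k) x = y - \<eta> *\<^sub>R G y" unfolding y_def by simp
  have n1: "norm (y - \<eta> *\<^sub>R G y - x) \<le> 2 * \<eta> * real (Suc k) * a"
  proof -
    have "norm (y - \<eta> *\<^sub>R G y - x) \<le> norm (y - x) + \<eta> * norm (G y)"
      using norm_triangle_ineq4[of "y - x" "\<eta> *\<^sub>R G y"] eta by (simp add: algebra_simps)
    also have "norm (G y) \<le> a + K * (2 * \<eta> * real k * a)"
      using Gy norm_triangle_ineq2[of "G y" "G x"] unfolding a_def by linarith
    then have "\<eta> * norm (G y) \<le> \<eta> * (a + K * (2 * \<eta> * real k * a))" using eta by (rule mult_left_mono)
    also have "\<eta> * (a + K * (2 * \<eta> * real k * a)) = \<eta> * a + (2 * \<eta> * K * real k) * (\<eta> * a)"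
      by (simp add: algebra_simps)
    also have "\<dots> \<le> \<eta> * a + 1 * (\<eta> * a)"
      using ks a0 eta by (intro add_left_mono mult_right_mono) auto
    finally show ?thesis using IH1 by (simp add: algebra_simps)
  qed
  have n2: "norm (y - \<eta> *\<^sub>R G y - (x - (\<eta> * real (Suc k)) *\<^sub>R G x)) \<le> 2 * \<eta>\<^sup>2 * K * (real (Suc k))\<^sup>2 * a"
  proof -
    have eq: "y - \<eta> *\<^sub>R G y - (x - (\<eta> * real (Suc k)) *\<^sub>R G x) = (y - (x - (\<eta> * real k) *\<^sub>R G x)) - \<eta> *\<^sub>R (G y - G x)"
      by (simp add: algebra_simps)
    have "norm (y - \<eta> *\<^sub>R G y - (x - (\<eta> * real (Suc k)) *\<^sub>R G x)) \<le> norm (y - (x - (\<eta> * real k) *\<^sub>R G x)) + \<eta> * norm (G y - G x)"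
      unfolding eq using norm_triangle_ineq4 eta by (metis abs_of_nonneg norm_scaleR)
    also have "\<dots> \<le> 2 * \<eta>\<^sup>2 * K * (real k)\<^sup>2 * a + \<eta> * (K * (2 * \<eta> * real k * a))"
      using IH2 Gy eta by (intro add_mono mult_left_mono) auto
    also have "\<dots> = 2 * \<eta>\<^sup>2 * K * a * ((real k)\<^sup>2 + real k)" by (simp add: algebra_simps power2_eq_square)
    also have "\<dots> \<le> 2 * \<eta>\<^sup>2 * K * a * (real (Suc k))\<^sup>2"
      using K a0 eta by (intro mult_left_mono) (auto simp: power2_eq_square algebra_simps)
    finally show ?thesis by (simp add: mult_ac)
  qed
  show ?case using n1 n2 st unfolding a_def by simp
qed


lemma avg_client:
  assumes "A \<subseteq> {..<m}"
  shows "avg m (client_update xsrv A xs) = avg m xs"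
proof (cases "A = {}")
  case True
  then show ?thesis by (simp add: avg_def client_update_def)
next
  case False
  have fin: "finite A" using assms finite_subset by blast
  have cA: "real (card A) > 0" using False fin by (simp add: card_gt_0_iff)
  have "(\<Sum>i<m. client_update xsrv A xs i) = (\<Sum>i\<in>A. server_update xsrv A xs) + (\<Sum>i\<in>{..<m} - A. xs i)"
    unfolding client_update_def
    using sum.If_cases[of "{..<m}" "\<lambda>i. i \<in> A" "\<lambda>i. server_update xsrv A xs" xs] assms
    by (simp add: Int_absorb1 Diff_eq[symmetric])
  also have "(\<Sum>i\<in>A. server_update xsrv A xs) = (\<Sum>i\<in>A. xs i)"
    using False cA by (simp add: server_update_def sum_constant_scaleR)
  also have "(\<Sum>i\<in>A. xs i) + (\<Sum>i\<in>{..<m} - A. xs i) = (\<Sum>i<m. xs i)"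
    using sum.subset_diff[of A "{..<m}" xs] assms by (simp add: add.commute)
  finally show ?thesis by (simp add: avg_def)
qed

lemma final_arith:
  fixes \<eta> s L \<beta> \<zeta> \<sigma> \<kappa> G \<Delta> K c2 :: real
  assumes eta: "0 < \<eta>" and s: "1 \<le> s" and L: "1 \<le> L" and G: "0 \<le> G" and D: "0 \<le> \<Delta>"
    and small: "108 * (\<eta> * L * s) * (\<beta>\<^sup>2 + 1) \<le> 1"
    and c2: "c2 = 2 * \<eta> * s * (\<eta> * L * s)"
    and K0: "0 \<le> K" and K: "K \<le> 21 / 10 * (\<eta> * s * (\<eta> * L * s))"
  shows "- (\<eta> * s) * G / 2 + \<eta> * s * L\<^sup>2 * \<Delta> / 2 + c2 * G / 2
         + K * (2 * (1 + \<beta>\<^sup>2) * G + 2 * \<zeta>\<^sup>2 + 2 * L\<^sup>2 * \<Delta> + \<sigma>\<^sup>2)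
       \<le> - (\<eta> * s / 3) * G + \<eta> * s * L\<^sup>2 * \<Delta> + 6 * \<eta>\<^sup>2 * s\<^sup>2 * L * (\<zeta>\<^sup>2 + \<sigma>\<^sup>2) * (1 + \<kappa>\<^sup>2 * L\<^sup>2)"
proof -
  define d where "d = \<eta> * L * s"
  have d0: "0 \<le> d" using eta s L by (simp add: d_def)
  have b1: "1 \<le> \<beta>\<^sup>2 + 1" by simp
  have sm0: "108 * (d * (\<beta>\<^sup>2 + 1)) \<le> 1" using small unfolding d_def by (simp add: mult.assoc)
  then have sm: "d * (\<beta>\<^sup>2 + 1) \<le> 1 / 108" by linarith
  have "d * (\<beta>\<^sup>2 + 1) = d + d * \<beta>\<^sup>2" by (simp add: algebra_simps)
  moreover have "0 \<le> d * \<beta>\<^sup>2" using d0 by simp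
  ultimately have d1: "108 * d \<le> 1" using sm by linarith
  have es: "0 \<le> \<eta> * s" using eta s by simp
  have i1: "K * (1 + \<beta>\<^sup>2) \<le> 21/10 * (\<eta> * s) / 108"
  proof -
    have "K * (1 + \<beta>\<^sup>2) \<le> 21 / 10 * (\<eta> * s * d) * (1 + \<beta>\<^sup>2)"
      using K unfolding d_def by (intro mult_right_mono) auto
    also have "\<dots> = 21/10 * (\<eta> * s) * (d * (\<beta>\<^sup>2 + 1))" by (simp add: algebra_simps)
    also have "\<dots> \<le> 21/10 * (\<eta> * s) * (1/108)"
      using sm es by (intro mult_left_mono) auto
    finally show ?thesis by simp
  qed
  have i2: "K \<le> 21/10 * (\<eta> * s) / 108"
  proof -
    have "K \<le> 21 / 10 * (\<eta> * s) * d" using K unfolding d_def by (simp add: mult_ac)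
    also have "\<dots> \<le> 21/10 * (\<eta> * s) * (1/108)" using d1 es by (intro mult_left_mono) auto
    finally show ?thesis by simp
  qed
  have i3: "c2 \<le> 2 * (\<eta> * s) / 108"
  proof -
    have "c2 = 2 * (\<eta> * s) * d" unfolding c2 d_def by simp
    also have "\<dots> \<le> 2 * (\<eta> * s) * (1/108)" using d1 es by (intro mult_left_mono) auto
    finally show ?thesis by simp
  qed
  have i4: "K \<le> 21/10 * (\<eta>\<^sup>2 * s\<^sup>2 * L)" using K by (simp add: power2_eq_square mult_ac)
  have z: "0 \<le> \<zeta>\<^sup>2 + \<sigma>\<^sup>2" by simp
  have kk: "1 \<le> 1 + \<kappa>\<^sup>2 * L\<^sup>2" by simp
  have e2: "0 \<le> \<eta>\<^sup>2 * s\<^sup>2 * L" using L by simp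
  define q where "q = \<eta> * s * G"
  have q0: "0 \<le> q" using es G by (simp add: q_def)
  have A1: "c2 * G / 2 \<le> q / 108"
  proof -
    have "c2 * G / 2 \<le> (2 * (\<eta> * s) / 108) * G / 2" using i3 G by (intro divide_right_mono mult_right_mono) auto
    also have "\<dots> = q / 108" by (simp add: q_def)
    finally show ?thesis .
  qed
  have A2: "K * (2 * (1 + \<beta>\<^sup>2) * G) \<le> 42 / 10 * q / 108"
  proof -
    have "K * (2 * (1 + \<beta>\<^sup>2) * G) = 2 * (K * (1 + \<beta>\<^sup>2)) * G" by (simp add: mult_ac)
    also have "\<dots> \<le> 2 * (21/10 * (\<eta> * s) / 108) * G"
      using i1 G by (intro mult_right_mono) auto
    also have "\<dots> = 42 / 10 * q / 108" by (simp add: q_def)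
    finally show ?thesis .
  qed
  define P where "P = \<eta> * s * L\<^sup>2 * \<Delta>"
  have B: "K * (2 * L\<^sup>2 * \<Delta>) \<le> P / 2"
  proof -
    have "K * (2 * L\<^sup>2 * \<Delta>) \<le> (21/10 * (\<eta> * s) / 108) * (2 * L\<^sup>2 * \<Delta>)"
      using i2 D by (intro mult_right_mono) auto
    also have "\<dots> \<le> (\<eta> * s / 4) * (2 * L\<^sup>2 * \<Delta>)"
      using es D by (intro mult_right_mono) auto
    also have "\<dots> = P / 2" by (simp add: P_def)
    finally show ?thesis .
  qed
  define R where "R = 6 * \<eta>\<^sup>2 * s\<^sup>2 * L * (\<zeta>\<^sup>2 + \<sigma>\<^sup>2) * (1 + \<kappa>\<^sup>2 * L\<^sup>2)"
  have C: "K * (2 * \<zeta>\<^sup>2 + \<sigma>\<^sup>2) \<le> R"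
  proof -
    have "K * (2 * \<zeta>\<^sup>2 + \<sigma>\<^sup>2) \<le> K * (2 * (\<zeta>\<^sup>2 + \<sigma>\<^sup>2))" using K0 by (intro mult_left_mono) auto
    also have "\<dots> \<le> (21/10 * (\<eta>\<^sup>2 * s\<^sup>2 * L)) * (2 * (\<zeta>\<^sup>2 + \<sigma>\<^sup>2))" using i4 z by (intro mult_right_mono) auto
    also have "\<dots> \<le> 6 * (\<eta>\<^sup>2 * s\<^sup>2 * L) * (\<zeta>\<^sup>2 + \<sigma>\<^sup>2)"
    proof -
      have "0 \<le> (\<eta>\<^sup>2 * s\<^sup>2 * L) * (\<zeta>\<^sup>2 + \<sigma>\<^sup>2)" using e2 z by (rule mult_nonneg_nonneg)
      moreover have "(21/10 * (\<eta>\<^sup>2 * s\<^sup>2 * L)) * (2 * (\<zeta>\<^sup>2 + \<sigma>\<^sup>2)) = 42/10 * ((\<eta>\<^sup>2 * s\<^sup>2 * L) * (\<zeta>\<^sup>2 + \<sigma>\<^sup>2))"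
        by simp
      moreover have "6 * (\<eta>\<^sup>2 * s\<^sup>2 * L) * (\<zeta>\<^sup>2 + \<sigma>\<^sup>2) = 6 * ((\<eta>\<^sup>2 * s\<^sup>2 * L) * (\<zeta>\<^sup>2 + \<sigma>\<^sup>2))"
        by simp
      ultimately show ?thesis by linarith
    qed
    also have "\<dots> \<le> 6 * (\<eta>\<^sup>2 * s\<^sup>2 * L) * (\<zeta>\<^sup>2 + \<sigma>\<^sup>2) * (1 + \<kappa>\<^sup>2 * L\<^sup>2)"
      using mult_left_mono[OF kk, of "6 * (\<eta>\<^sup>2 * s\<^sup>2 * L) * (\<zeta>\<^sup>2 + \<sigma>\<^sup>2)"] e2 z by simp
    finally show ?thesis by (simp add: mult_ac R_def)
  qed
  have E: "K * (2 * (1 + \<beta>\<^sup>2) * G + 2 * \<zeta>\<^sup>2 + 2 * L\<^sup>2 * \<Delta> + \<sigma>\<^sup>2)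
      = K * (2 * (1 + \<beta>\<^sup>2) * G) + K * (2 * L\<^sup>2 * \<Delta>) + K * (2 * \<zeta>\<^sup>2 + \<sigma>\<^sup>2)"
    by (simp add: algebra_simps)
  have E1: "- (\<eta> * s) * G / 2 = - q / 2" by (simp add: q_def)
  have E2: "\<eta> * s * L\<^sup>2 * \<Delta> / 2 = P / 2" by (simp add: P_def)
  have E3: "- (\<eta> * s / 3) * G = - q / 3" by (simp add: q_def)
  show ?thesis unfolding E E1 E2 E3 using A1 A2 B C q0 by (simp only: P_def[symmetric] R_def[symmetric])
qed



lemma sq_sum_le: fixes u v :: real shows "(u + v)\<^sup>2 \<le> 2 * u\<^sup>2 + 2 * v\<^sup>2"
proof -
  have "(u + v)\<^sup>2 + (u - v)\<^sup>2 = 2 * u\<^sup>2 + 2 * v\<^sup>2" by (simp add: power2_eq_square algebra_simps)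
  moreover have "0 \<le> (u - v)\<^sup>2" by simp
  ultimately show ?thesis by linarith
qed

lemma ab_le: fixes u v :: real shows "u * v \<le> (u\<^sup>2 + v\<^sup>2) / 2"
proof -
  have "0 \<le> (u - v)\<^sup>2" by simp
  then show ?thesis by (simp add: power2_eq_square algebra_simps)
qed

lemma lin_help: fixes a b c p q r t u G :: real
  assumes "a = b + c" "- c \<le> p" "p \<le> q" "q \<le> (r + t) / 2" "t = u" "G = r" shows "b - (G + u) / 2 \<le> a"
  using assms by argo

lemma le_one_plus_sq: fixes t :: real shows "t \<le> 1 + t\<^sup>2"
proof -
  have "0 \<le> (t - 1/2)\<^sup>2" by simp
  then show ?thesis by (simp add: power2_eq_square algebra_simps)
qed

theorem lemma2:
  fixes M :: "'w measure" and S :: "'s measure"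
    and D :: "nat \<Rightarrow> 's measure"
    and l :: "nat \<Rightarrow> 'a::euclidean_space \<Rightarrow> 's \<Rightarrow> real"
    and gl :: "nat \<Rightarrow> 'a \<Rightarrow> 's \<Rightarrow> 'a"
    and gF :: "nat \<Rightarrow> 'a \<Rightarrow> 'a"
    and Li :: "nat \<Rightarrow> real"
    and m s :: nat and \<eta> L \<beta> \<zeta> \<sigma> c :: real
    and xi :: "nat \<Rightarrow> 'w \<Rightarrow> 's"
    and A :: "'w \<Rightarrow> nat set"
    and x :: "nat \<Rightarrow> 'a" and xsrv :: 'a
  assumes m_pos: "0 < m"
    and s_ge: "1 \<le> s"
    and eta_pos: "0 < \<eta>"
    and M_prob: "prob_space M"
    and D_prob: "\<forall>i<m. prob_space (D i)"
    and l_integrable: "\<forall>i<m. \<forall>y. integrable (D i) (\<lambda>z. l i y z)"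
    and l_grad: "\<forall>i<m. \<forall>z y. ((\<lambda>v. l i v z) has_derivative (\<lambda>h. gl i y z \<bullet> h)) (at y)"
    and F_grad: "\<forall>i<m. \<forall>y. (local_obj D l i has_derivative (\<lambda>h. gF i y \<bullet> h)) (at y)"
    and A1: "\<forall>i<m. \<forall>z y y'. norm (gl i y z - gl i y' z) \<le> Li i * norm (y - y')"
    and L_def: "L = Max (Li ` {..<m})"
    and L_ge: "1 \<le> L"
    and xi_meas: "\<forall>i<m. xi i \<in> M \<rightarrow>\<^sub>M S"
    and gl_meas: "\<forall>i<m. (\<lambda>p. gl i (fst p) (snd p)) \<in> borel_measurable (borel \<Otimes>\<^sub>M S)"
    and A2_unbiased: "\<forall>i<m. (\<integral>\<omega>. gl i (x i) (xi i \<omega>) \<partial>M) = gF i (x i)"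
    and A2_var: "\<forall>i<m. \<forall>y. (\<integral>\<^sup>+\<omega>. ennreal ((norm (gl i y (xi i \<omega>) - gF i y))\<^sup>2) \<partial>M) \<le> ennreal (\<sigma>\<^sup>2)"
    and beta_nn: "0 \<le> \<beta>" and zeta_nn: "0 \<le> \<zeta>"
    and A4: "\<forall>y. (1 / real m) * (\<Sum>i<m. (norm (gF i y - global_grad m gF y))\<^sup>2)
                 \<le> \<beta>\<^sup>2 * (norm (global_grad m gF y))\<^sup>2 + \<zeta>\<^sup>2"
    and A_sub: "\<forall>\<omega>. A \<omega> \<subseteq> {..<m}"
    and c_pos: "0 < c"
    and A_prob: "\<forall>i<m. {\<omega> \<in> space M. i \<in> A \<omega>} \<in> sets M \<and> c \<le> measure M {\<omega> \<in> space M. i \<in> A \<omega>}"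
    and eta_le: "\<eta> \<le> 1 / (108 * L\<^sup>2 * real s ^ 3 * (\<beta>\<^sup>2 + 1) * (1 + (kappa m Li \<eta> s)\<^sup>2 * L\<^sup>2))"
  shows "(\<integral>\<omega>. global_obj m D l
             (avg m (client_update xsrv (A \<omega>) (\<lambda>i. local_steps gl \<eta> i (xi i \<omega>) s (x i))))
           - global_obj m D l (avg m x) \<partial>M)
         \<le> - (\<eta> * real s / 3) * (norm (global_grad m gF (avg m x)))\<^sup>2
           + \<eta> * real s * (L\<^sup>2 / real m) * (\<Sum>i<m. (norm (x i - avg m x))\<^sup>2)
           + 6 * \<eta>\<^sup>2 * (real s)\<^sup>2 * L * (\<zeta>\<^sup>2 + \<sigma>\<^sup>2) * (1 + (kappa m Li \<eta> s)\<^sup>2 * L\<^sup>2)"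
proof -
  interpret P: prob_space M by (rule M_prob)
  have L0: "0 \<le> L" using L_ge by simp
  obtain b :: 'a where b: "b \<in> Basis" using nonempty_Basis by blast
  have Li0: "0 \<le> Li i" if "i < m" for i
  proof -
    have "norm (gl i b undefined - gl i 0 undefined) \<le> Li i * norm (b - 0)" using A1 that by blast
    then show ?thesis using b by (simp add: order_trans[OF norm_ge_zero])
  qed
  have LiL: "Li i \<le> L" if "i < m" for i using that unfolding L_def by (intro Max_ge) auto
  have lipL: "norm (gl i y z - gl i y' z) \<le> L * norm (y - y')" if "i < m" for i y y' z
    using A1 that LiL by (meson mult_right_mono norm_ge_zero order_trans)
  have locF: "local_obj D l i = (\<lambda>y. \<integral>z. l i y z \<partial>D i)" for i by (rule ext) (simp add: local_obj_def)
  have gF_lip: "norm (gF i y - gF i y') \<le> L * norm (y - y')" if "i < m" for i y y'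
  proof -
    have "norm (gF i y - gF i y') \<le> Li i * norm (y - y')"
      by (rule obj_smooth[where Dm="D i" and lf="l i" and glf="gl i"])
        (use that D_prob l_integrable l_grad A1 F_grad locF in auto)
    then show ?thesis using LiL that by (meson mult_right_mono norm_ge_zero order_trans)
  qed
  have Fi_quad: "\<bar>local_obj D l i (y + h) - local_obj D l i y - gF i y \<bullet> h\<bar> \<le> L * (norm h)\<^sup>2" if "i < m" for i y h
    by (rule quad_bound) (use F_grad gF_lip that in auto)
  define F where "F = global_obj m D l"
  define gg where "gg = global_grad m gF"
  have mpos: "real m > 0" using m_pos by simp
  have F_quad: "\<bar>F (y + h) - F y - gg y \<bullet> h\<bar> \<le> L * (norm h)\<^sup>2" for y h
  proof -
    have "F (y + h) - F y - gg y \<bullet> h = (1 / real m) * (\<Sum>i<m. local_obj D l i (y + h) - local_obj D l i y - gF i y \<bullet> h)"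
      unfolding F_def gg_def global_obj_def global_grad_def
      unfolding inner_scaleR_left inner_sum_left sum_subtractf by (simp add: right_diff_distrib)
    also have "\<bar>\<dots>\<bar> \<le> (1 / real m) * (\<Sum>i<m. \<bar>local_obj D l i (y + h) - local_obj D l i y - gF i y \<bullet> h\<bar>)"
      using mpos by (simp add: abs_mult divide_right_mono sum_abs)
    also have "\<dots> \<le> (1 / real m) * (\<Sum>i<m. L * (norm h)\<^sup>2)"
      using Fi_quad by (intro mult_left_mono sum_mono) auto
    also have "\<dots> = L * (norm h)\<^sup>2" using mpos by simp
    finally show ?thesis .
  qed
  have F_der: "(F has_derivative (\<lambda>h. gg y \<bullet> h)) (at y)" for y
  proof -
    have "((\<lambda>v. \<Sum>i<m. local_obj D l i v) has_derivative (\<lambda>h. \<Sum>i<m. gF i y \<bullet> h)) (at y)"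
      using F_grad by (intro has_derivative_sum) auto
    then have "((\<lambda>v. (1 / real m) * (\<Sum>i<m. local_obj D l i v)) has_derivative (\<lambda>h. (1 / real m) * (\<Sum>i<m. gF i y \<bullet> h))) (at y)"
      by (rule has_derivative_mult_right)
    then show ?thesis unfolding F_def gg_def global_obj_def global_grad_def
      by (simp add: inner_sum_left)
  qed
  have F_cont: "continuous_on UNIV F"
    using F_der has_derivative_continuous continuous_at_imp_continuous_on by blast
  have xi_m: "xi i \<in> M \<rightarrow>\<^sub>M S" if "i < m" for i using xi_meas that by blast
  define a where "a = (\<lambda>i \<omega>. gl i (x i) (xi i \<omega>))"
  define mu where "mu = (\<lambda>i. gF i (x i))"
  define xs where "xs = (\<lambda>i \<omega>. local_steps gl \<eta> i (xi i \<omega>) s (x i))"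
  define xb where "xb = avg m x"
  define g where "g = gg xb"
  define c2 where "c2 = 2 * \<eta> * real s * (\<eta> * L * real s)"
  define K where "K = c2 / 2 + L * (\<eta> * real s + c2)\<^sup>2"
  have a_meas: "a i \<in> borel_measurable M" if "i < m" for i
  proof -
    have pm: "(\<lambda>\<omega>. (x i, xi i \<omega>)) \<in> M \<rightarrow>\<^sub>M borel \<Otimes>\<^sub>M S"
      using xi_m[OF that] by (intro measurable_Pair) auto
    have gm: "(\<lambda>p. gl i (fst p) (snd p)) \<in> borel_measurable (borel \<Otimes>\<^sub>M S)" using gl_meas that by blast
    show ?thesis using measurable_compose[OF pm gm] unfolding a_def by simp
  qed
  have steps_meas: "(\<lambda>\<omega>. ((\<lambda>y. y - \<eta> *\<^sub>R gl i y (xi i \<omega>)) ^^ k) (x i)) \<in> borel_measurable M" if "i < m" for i k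
  proof (induction k)
    case 0
    then show ?case by simp
  next
    case (Suc k)
    have pm: "(\<lambda>\<omega>. (((\<lambda>y. y - \<eta> *\<^sub>R gl i y (xi i \<omega>)) ^^ k) (x i), xi i \<omega>)) \<in> M \<rightarrow>\<^sub>M borel \<Otimes>\<^sub>M S"
      using xi_m[OF that] Suc by (intro measurable_Pair) auto
    have gm: "(\<lambda>p. gl i (fst p) (snd p)) \<in> borel_measurable (borel \<Otimes>\<^sub>M S)" using gl_meas that by blast
    have "(\<lambda>\<omega>. gl i (((\<lambda>y. y - \<eta> *\<^sub>R gl i y (xi i \<omega>)) ^^ k) (x i)) (xi i \<omega>)) \<in> borel_measurable M"
      using measurable_compose[OF pm gm] by simp
    then show ?case using Suc by simp
  qed
  have xs_meas: "xs i \<in> borel_measurable M" if "i < m" for i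
    unfolding xs_def local_steps_def using steps_meas[OF that] by simp
  define nw where "nw = (\<lambda>\<omega>. avg m (\<lambda>i. xs i \<omega>))"
  have nw_meas: "nw \<in> borel_measurable M"
    unfolding nw_def avg_def using xs_meas by (intro borel_measurable_scaleR borel_measurable_sum) auto
  have Y_meas: "(\<lambda>\<omega>. F (nw \<omega>) - F xb) \<in> borel_measurable M"
    using borel_measurable_continuous_on[OF F_cont nw_meas] by simp
  have s1: "1 \<le> real s" using s_ge by simp
  have small: "108 * (\<eta> * L * real s) * (\<beta>\<^sup>2 + 1) \<le> 1"
  proof -
    define kp where "kp = kappa m Li \<eta> s"
    define den where "den = 108 * L\<^sup>2 * real s ^ 3 * (\<beta>\<^sup>2 + 1) * (1 + kp\<^sup>2 * L\<^sup>2)"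
    define X where "X = 108 * L * real s * (\<beta>\<^sup>2 + 1)"
    define f where "f = L * (real s)\<^sup>2 * (1 + kp\<^sup>2 * L\<^sup>2)"
    have X0: "0 \<le> X" unfolding X_def using L0 by simp
    have f1: "1 \<le> f"
    proof -
      have "1 \<le> (real s)\<^sup>2" using s1 by (simp add: one_le_power)
      then have "1 * 1 \<le> L * (real s)\<^sup>2" using L_ge by (intro mult_mono) auto
      moreover have "1 \<le> 1 + kp\<^sup>2 * L\<^sup>2" by simp
      ultimately have "1 * 1 \<le> (L * (real s)\<^sup>2) * (1 + kp\<^sup>2 * L\<^sup>2)" by (intro mult_mono) auto
      then show ?thesis by (simp add: f_def)
    qed
    have den_eq: "den = X * f" unfolding den_def X_def f_def by (simp add: power2_eq_square power3_eq_cube algebra_simps)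
    have bp: "0 < \<beta>\<^sup>2 + 1" by (rule add_nonneg_pos[OF zero_le_power2 zero_less_one])
    have den0: "0 < den" unfolding den_eq using bp f1 L_ge s1 unfolding X_def by (intro mult_pos_pos) auto
    have "\<eta> * den \<le> 1" using eta_le den0 unfolding den_def kp_def by (simp add: le_divide_eq mult.commute)
    moreover have "\<eta> * X \<le> \<eta> * den"
      unfolding den_eq using mult_left_mono[OF f1 X0] eta_pos by (intro mult_left_mono) auto
    ultimately have "\<eta> * X \<le> 1" by linarith
    then show ?thesis unfolding X_def by (simp add: algebra_simps)
  qed
  have d_small: "\<eta> * L * real s \<le> 1 / 108"
  proof -
    have "108 * (\<eta> * L * real s) * 1 \<le> 108 * (\<eta> * L * real s) * (\<beta>\<^sup>2 + 1)"
      using eta_pos L0 s1 by (intro mult_left_mono) auto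
    then show ?thesis using small by linarith
  qed
  have eta0: "0 \<le> \<eta>" using eta_pos by simp
  have c20: "0 \<le> c2" unfolding c2_def using eta0 L0 by simp
  have rb: "norm (xs i \<omega> - (x i - (\<eta> * real s) *\<^sub>R a i \<omega>)) \<le> c2 * norm (a i \<omega>)" if "i < m" for i \<omega>
  proof -
    have cond: "2 * \<eta> * Li i * real s \<le> 1"
    proof -
      have "\<eta> * Li i * real s \<le> \<eta> * L * real s"
        using LiL[OF that] eta0 s1 by (intro mult_right_mono mult_left_mono) auto
      then show ?thesis using d_small by linarith
    qed
    have "norm (((\<lambda>y. y - \<eta> *\<^sub>R gl i y (xi i \<omega>)) ^^ s) (x i) - (x i - (\<eta> * real s) *\<^sub>R gl i (x i) (xi i \<omega>)))
       \<le> 2 * \<eta>\<^sup>2 * Li i * (real s)\<^sup>2 * norm (gl i (x i) (xi i \<omega>))"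
      using steps_bound[where G="\<lambda>v. gl i v (xi i \<omega>)" and K="Li i" and \<eta>=\<eta> and s=s and k=s and x="x i"]
        A1 that Li0[OF that] eta0 cond by auto
    also have "\<dots> \<le> 2 * \<eta>\<^sup>2 * L * (real s)\<^sup>2 * norm (gl i (x i) (xi i \<omega>))"
      using LiL[OF that] by (intro mult_right_mono mult_left_mono) auto
    finally show ?thesis unfolding xs_def local_steps_def a_def c2_def by (simp add: power2_eq_square mult_ac)
  qed
  have step_norm: "norm (xs i \<omega> - x i) \<le> (\<eta> * real s + c2) * norm (a i \<omega>)" if "i < m" for i \<omega>
  proof -
    have "xs i \<omega> - x i = (xs i \<omega> - (x i - (\<eta> * real s) *\<^sub>R a i \<omega>)) - (\<eta> * real s) *\<^sub>R a i \<omega>" by simp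
    then have "norm (xs i \<omega> - x i) \<le> norm (xs i \<omega> - (x i - (\<eta> * real s) *\<^sub>R a i \<omega>)) + norm ((\<eta> * real s) *\<^sub>R a i \<omega>)"
      by (metis norm_triangle_ineq4)
    then show ?thesis using rb[OF that, of \<omega>] eta0 by (simp add: algebra_simps)
  qed
  have step_inner: "g \<bullet> (xs i \<omega> - x i) \<le> - (\<eta> * real s) * (g \<bullet> a i \<omega>) + c2 / 2 * (norm g)\<^sup>2 + c2 / 2 * (norm (a i \<omega>))\<^sup>2"
    if "i < m" for i \<omega>
  proof -
    define r where "r = xs i \<omega> - (x i - (\<eta> * real s) *\<^sub>R a i \<omega>)"
    have "g \<bullet> (xs i \<omega> - x i) = - (\<eta> * real s) * (g \<bullet> a i \<omega>) + g \<bullet> r"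
      unfolding r_def by (simp add: inner_diff_right algebra_simps)
    also have "g \<bullet> r \<le> norm g * norm r" by (rule norm_cauchy_schwarz)
    also have "norm g * norm r \<le> norm g * (c2 * norm (a i \<omega>))" using rb[OF that] unfolding r_def by (simp add: mult_left_mono)
    also have "\<dots> = c2 * (norm g * norm (a i \<omega>))" by simp
    also have "\<dots> \<le> c2 * (((norm g)\<^sup>2 + (norm (a i \<omega>))\<^sup>2) / 2)" using c20 ab_le by (intro mult_left_mono) auto
    finally show ?thesis by (simp add: algebra_simps)
  qed
  define hh where "hh = (\<lambda>\<omega>. (1 / real m) *\<^sub>R (\<Sum>i<m. xs i \<omega> - x i))"
  define Pa where "Pa = (\<lambda>\<omega>. (1 / real m) * (\<Sum>i<m. (norm (a i \<omega>))\<^sup>2))"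
  have nw_eq: "nw \<omega> = xb + hh \<omega>" for \<omega>
    unfolding nw_def xb_def avg_def hh_def by (simp add: sum_subtractf scaleR_diff_right)
  have Pa0: "0 \<le> Pa \<omega>" for \<omega> unfolding Pa_def using mpos by (simp add: sum_nonneg)
  have hn: "norm (hh \<omega>) \<le> (\<eta> * real s + c2) * ((1 / real m) * (\<Sum>i<m. norm (a i \<omega>)))" for \<omega>
  proof -
    have "norm (hh \<omega>) = (1 / real m) * norm (\<Sum>i<m. xs i \<omega> - x i)" unfolding hh_def using mpos by simp
    also have "\<dots> \<le> (1 / real m) * (\<Sum>i<m. norm (xs i \<omega> - x i))" using mpos by (intro mult_left_mono norm_sum) auto
    also have "\<dots> \<le> (1 / real m) * (\<Sum>i<m. (\<eta> * real s + c2) * norm (a i \<omega>))"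
      using mpos step_norm by (intro mult_left_mono sum_mono) auto
    finally show ?thesis by (simp add: sum_distrib_left mult_ac)
  qed
  have hn2: "(norm (hh \<omega>))\<^sup>2 \<le> (\<eta> * real s + c2)\<^sup>2 * Pa \<omega>" for \<omega>
  proof -
    have "(norm (hh \<omega>))\<^sup>2 \<le> ((\<eta> * real s + c2) * ((1 / real m) * (\<Sum>i<m. norm (a i \<omega>))))\<^sup>2"
      using hn[of \<omega>] by (intro power_mono) auto
    also have "\<dots> = (\<eta> * real s + c2)\<^sup>2 * ((\<Sum>i<m. norm (a i \<omega>))\<^sup>2 / (real m)\<^sup>2)"
      by (simp add: power_mult_distrib power_divide)
    also have "(\<Sum>i<m. norm (a i \<omega>))\<^sup>2 / (real m)\<^sup>2 \<le> (\<Sum>i<m. (norm (a i \<omega>))\<^sup>2) * real m / (real m)\<^sup>2"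
      using sum_squared_le_sum_of_squares[of "\<lambda>i. norm (a i \<omega>)" "{..<m}"] mpos
      by (intro divide_right_mono) auto
    also have "\<dots> = Pa \<omega>" unfolding Pa_def using mpos by (simp add: power2_eq_square)
    finally show ?thesis by (simp add: mult_left_mono)
  qed
  define U where "U = (\<lambda>\<omega>. c2 / 2 * (norm g)\<^sup>2 + (1 / real m) * (\<Sum>i<m. - (\<eta> * real s) * (g \<bullet> a i \<omega>) + K * (norm (a i \<omega>))\<^sup>2))"
  have gh: "g \<bullet> hh \<omega> \<le> c2 / 2 * (norm g)\<^sup>2 + (1 / real m) * (\<Sum>i<m. - (\<eta> * real s) * (g \<bullet> a i \<omega>) + c2 / 2 * (norm (a i \<omega>))\<^sup>2)" for \<omega>
  proof -
    have "g \<bullet> hh \<omega> = (1 / real m) * (\<Sum>i<m. g \<bullet> (xs i \<omega> - x i))" unfolding hh_def by (simp add: inner_sum_right)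
    also have "\<dots> \<le> (1 / real m) * (\<Sum>i<m. c2 / 2 * (norm g)\<^sup>2 + (- (\<eta> * real s) * (g \<bullet> a i \<omega>) + c2 / 2 * (norm (a i \<omega>))\<^sup>2))"
      using mpos step_inner by (intro mult_left_mono sum_mono) (auto simp: algebra_simps)
    also have "\<dots> = c2 / 2 * (norm g)\<^sup>2 + (1 / real m) * (\<Sum>i<m. - (\<eta> * real s) * (g \<bullet> a i \<omega>) + c2 / 2 * (norm (a i \<omega>))\<^sup>2)"
      using mpos by (simp add: sum.distrib distrib_left)
    finally show ?thesis .
  qed
  have Y_up: "F (nw \<omega>) - F xb \<le> U \<omega>" for \<omega>
  proof -
    have "F (nw \<omega>) - F xb \<le> g \<bullet> hh \<omega> + L * (norm (hh \<omega>))\<^sup>2"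
      using F_quad[of xb "hh \<omega>"] unfolding nw_eq g_def by linarith
    also have "\<dots> \<le> c2 / 2 * (norm g)\<^sup>2 + (1 / real m) * (\<Sum>i<m. - (\<eta> * real s) * (g \<bullet> a i \<omega>) + c2 / 2 * (norm (a i \<omega>))\<^sup>2)
        + L * ((\<eta> * real s + c2)\<^sup>2 * Pa \<omega>)"
      using gh hn2 L0 by (intro add_mono mult_left_mono) auto
    also have "\<dots> = U \<omega>"
    proof -
      have "(\<Sum>i<m. - (\<eta> * real s) * (g \<bullet> a i \<omega>) + K * (norm (a i \<omega>))\<^sup>2)
          = (\<Sum>i<m. (- (\<eta> * real s) * (g \<bullet> a i \<omega>) + c2 / 2 * (norm (a i \<omega>))\<^sup>2) + (L * (\<eta> * real s + c2)\<^sup>2) * (norm (a i \<omega>))\<^sup>2)"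
        by (rule sum.cong) (simp_all add: K_def algebra_simps)
      also have "\<dots> = (\<Sum>i<m. - (\<eta> * real s) * (g \<bullet> a i \<omega>) + c2 / 2 * (norm (a i \<omega>))\<^sup>2) + (L * (\<eta> * real s + c2)\<^sup>2) * (\<Sum>i<m. (norm (a i \<omega>))\<^sup>2)"
        by (simp only: sum.distrib sum_distrib_left)
      finally have e: "(\<Sum>i<m. - (\<eta> * real s) * (g \<bullet> a i \<omega>) + K * (norm (a i \<omega>))\<^sup>2) = \<dots>" .
      show ?thesis unfolding U_def Pa_def e by (simp add: algebra_simps)
    qed
    finally show ?thesis .
  qed
  have Y_abs: "\<bar>F (nw \<omega>) - F xb\<bar> \<le> (norm g)\<^sup>2 / 2 + (1 / 2 + L) * (\<eta> * real s + c2)\<^sup>2 * Pa \<omega>" for \<omega>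
  proof -
    have "\<bar>F (nw \<omega>) - F xb\<bar> \<le> \<bar>g \<bullet> hh \<omega>\<bar> + L * (norm (hh \<omega>))\<^sup>2"
      using F_quad[of xb "hh \<omega>"] unfolding nw_eq g_def by linarith
    also have "\<bar>g \<bullet> hh \<omega>\<bar> \<le> norm g * norm (hh \<omega>)" by (rule Cauchy_Schwarz_ineq2)
    also have "norm g * norm (hh \<omega>) \<le> ((norm g)\<^sup>2 + (norm (hh \<omega>))\<^sup>2) / 2" by (rule ab_le)
    finally have "\<bar>F (nw \<omega>) - F xb\<bar> \<le> (norm g)\<^sup>2 / 2 + (1 / 2 + L) * (norm (hh \<omega>))\<^sup>2"
      by (simp add: algebra_simps add_divide_distrib)
    also have "\<dots> \<le> (norm g)\<^sup>2 / 2 + (1 / 2 + L) * ((\<eta> * real s + c2)\<^sup>2 * Pa \<omega>)"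
      using hn2 L0 by (intro add_left_mono mult_left_mono) auto
    finally show ?thesis by (simp add: mult_ac)
  qed
  have v_int: "integrable M (\<lambda>\<omega>. (norm (a i \<omega> - mu i))\<^sup>2)" and Ev: "(\<integral>\<omega>. (norm (a i \<omega> - mu i))\<^sup>2 \<partial>M) \<le> \<sigma>\<^sup>2"
    if "i < m" for i
  proof -
    have vm: "(\<lambda>\<omega>. (norm (a i \<omega> - mu i))\<^sup>2) \<in> borel_measurable M" using a_meas[OF that] by measurable
    have nn: "(\<integral>\<^sup>+\<omega>. ennreal ((norm (a i \<omega> - mu i))\<^sup>2) \<partial>M) \<le> ennreal (\<sigma>\<^sup>2)"
      using A2_var that unfolding a_def mu_def by blast
    show vi: "integrable M (\<lambda>\<omega>. (norm (a i \<omega> - mu i))\<^sup>2)"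
      unfolding integrable_iff_bounded using vm nn by (simp add: le_less_trans[OF _ ennreal_less_top])
    have "ennreal (\<integral>\<omega>. (norm (a i \<omega> - mu i))\<^sup>2 \<partial>M) = (\<integral>\<^sup>+\<omega>. ennreal ((norm (a i \<omega> - mu i))\<^sup>2) \<partial>M)"
      using nn_integral_eq_integral[OF vi] by simp
    with nn have "ennreal (\<integral>\<omega>. (norm (a i \<omega> - mu i))\<^sup>2 \<partial>M) \<le> ennreal (\<sigma>\<^sup>2)" by simp
    then show "(\<integral>\<omega>. (norm (a i \<omega> - mu i))\<^sup>2 \<partial>M) \<le> \<sigma>\<^sup>2"
      using ennreal_le_iff[of "\<sigma>\<^sup>2"] by simp
  qed
  have a2_int: "integrable M (\<lambda>\<omega>. (norm (a i \<omega>))\<^sup>2)" if "i < m" for i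
  proof (rule Bochner_Integration.integrable_bound[where f="\<lambda>\<omega>. 2 * (norm (a i \<omega> - mu i))\<^sup>2 + 2 * (norm (mu i))\<^sup>2"])
    show "integrable M (\<lambda>\<omega>. 2 * (norm (a i \<omega> - mu i))\<^sup>2 + 2 * (norm (mu i))\<^sup>2)" using v_int[OF that] by simp
    show "(\<lambda>\<omega>. (norm (a i \<omega>))\<^sup>2) \<in> borel_measurable M" using a_meas[OF that] by measurable
    show "AE \<omega> in M. norm ((norm (a i \<omega>))\<^sup>2) \<le> norm (2 * (norm (a i \<omega> - mu i))\<^sup>2 + 2 * (norm (mu i))\<^sup>2)"
    proof (intro AE_I2)
      fix \<omega>
      have "norm (a i \<omega>) \<le> norm (a i \<omega> - mu i) + norm (mu i)" using norm_triangle_ineq[of "a i \<omega> - mu i" "mu i"] by simp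
      then have "(norm (a i \<omega>))\<^sup>2 \<le> (norm (a i \<omega> - mu i) + norm (mu i))\<^sup>2" by (intro power_mono) auto
      also have "\<dots> \<le> 2 * (norm (a i \<omega> - mu i))\<^sup>2 + 2 * (norm (mu i))\<^sup>2" by (rule sq_sum_le)
      finally show "norm ((norm (a i \<omega>))\<^sup>2) \<le> norm (2 * (norm (a i \<omega> - mu i))\<^sup>2 + 2 * (norm (mu i))\<^sup>2)" by simp
    qed
  qed
  have a_int: "integrable M (a i)" if "i < m" for i
  proof (rule Bochner_Integration.integrable_bound[where f="\<lambda>\<omega>. 1 + (norm (a i \<omega>))\<^sup>2"])
    show "integrable M (\<lambda>\<omega>. 1 + (norm (a i \<omega>))\<^sup>2)" using a2_int[OF that] by simp
    show "a i \<in> borel_measurable M" by (rule a_meas[OF that])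
    show "AE \<omega> in M. norm (a i \<omega>) \<le> norm (1 + (norm (a i \<omega>))\<^sup>2)"
      using le_one_plus_sq by (intro AE_I2) (simp add: add_nonneg_nonneg)
  qed
  have Ea: "integral\<^sup>L M (a i) = mu i" if "i < m" for i
    using A2_unbiased that unfolding a_def mu_def by blast
  have Ea2: "(\<integral>\<omega>. (norm (a i \<omega>))\<^sup>2 \<partial>M) \<le> (norm (mu i))\<^sup>2 + \<sigma>\<^sup>2" if "i < m" for i
  proof -
    have pw: "(norm (a i \<omega>))\<^sup>2 = (norm (a i \<omega> - mu i))\<^sup>2 + 2 * (mu i \<bullet> a i \<omega>) - (norm (mu i))\<^sup>2" for \<omega>
      by (simp add: power2_norm_eq_inner inner_diff_left inner_diff_right inner_commute algebra_simps)
    have i1: "integrable M (\<lambda>\<omega>. 2 * (mu i \<bullet> a i \<omega>))" using a_int[OF that] by simp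
    have "(\<integral>\<omega>. (norm (a i \<omega>))\<^sup>2 \<partial>M) = (\<integral>\<omega>. (norm (a i \<omega> - mu i))\<^sup>2 + 2 * (mu i \<bullet> a i \<omega>) - (norm (mu i))\<^sup>2 \<partial>M)"
      using pw by simp
    also have "\<dots> = (\<integral>\<omega>. (norm (a i \<omega> - mu i))\<^sup>2 \<partial>M) + (\<integral>\<omega>. 2 * (mu i \<bullet> a i \<omega>) \<partial>M) - (norm (mu i))\<^sup>2"
      using v_int[OF that] i1 by (simp add: Bochner_Integration.integral_add Bochner_Integration.integral_diff P.prob_space)
    also have "(\<integral>\<omega>. 2 * (mu i \<bullet> a i \<omega>) \<partial>M) = 2 * (mu i \<bullet> mu i)"
      using a_int[OF that] Ea[OF that] by simp
    finally have "(\<integral>\<omega>. (norm (a i \<omega>))\<^sup>2 \<partial>M) = (\<integral>\<omega>. (norm (a i \<omega> - mu i))\<^sup>2 \<partial>M) + (norm (mu i))\<^sup>2"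
      by (simp add: power2_norm_eq_inner)
    then show ?thesis using Ev[OF that] by simp
  qed
  define G where "G = (norm g)\<^sup>2"
  have Pa_int: "integrable M Pa"
    unfolding Pa_def using a2_int by (intro integrable_mult_right Bochner_Integration.integrable_sum) auto
  have U_int: "integrable M U"
    unfolding U_def using a_int a2_int
    by (intro Bochner_Integration.integrable_add integrable_mult_right Bochner_Integration.integrable_sum integrable_const) auto
  have Y_int: "integrable M (\<lambda>\<omega>. F (nw \<omega>) - F xb)"
  proof (rule Bochner_Integration.integrable_bound[where f="\<lambda>\<omega>. G / 2 + (1 / 2 + L) * (\<eta> * real s + c2)\<^sup>2 * Pa \<omega>"])
    show "integrable M (\<lambda>\<omega>. G / 2 + (1 / 2 + L) * (\<eta> * real s + c2)\<^sup>2 * Pa \<omega>)"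
      using Pa_int by (intro Bochner_Integration.integrable_add integrable_mult_right integrable_const) auto
    show "(\<lambda>\<omega>. F (nw \<omega>) - F xb) \<in> borel_measurable M" by (rule Y_meas)
    show "AE \<omega> in M. norm (F (nw \<omega>) - F xb) \<le> norm (G / 2 + (1 / 2 + L) * (\<eta> * real s + c2)\<^sup>2 * Pa \<omega>)"
    proof (intro AE_I2)
      fix \<omega>
      have "0 \<le> G / 2 + (1 / 2 + L) * (\<eta> * real s + c2)\<^sup>2 * Pa \<omega>"
        unfolding G_def using L0 Pa0[of \<omega>] by (intro add_nonneg_nonneg mult_nonneg_nonneg) auto
      then show "norm (F (nw \<omega>) - F xb) \<le> norm (G / 2 + (1 / 2 + L) * (\<eta> * real s + c2)\<^sup>2 * Pa \<omega>)"
        using Y_abs[of \<omega>] unfolding G_def by simp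
    qed
  qed
  have K0: "0 \<le> K" unfolding K_def using c20 L0 by simp
  have EU: "integral\<^sup>L M U = c2 / 2 * G + (1 / real m) * (\<Sum>i<m. - (\<eta> * real s) * (g \<bullet> mu i) + K * (\<integral>\<omega>. (norm (a i \<omega>))\<^sup>2 \<partial>M))"
  proof -
    have "(\<integral>\<omega>. (\<Sum>i<m. - (\<eta> * real s) * (g \<bullet> a i \<omega>) + K * (norm (a i \<omega>))\<^sup>2) \<partial>M)
        = (\<Sum>i<m. (\<integral>\<omega>. - (\<eta> * real s) * (g \<bullet> a i \<omega>) + K * (norm (a i \<omega>))\<^sup>2 \<partial>M))"
      using a_int a2_int by (intro Bochner_Integration.integral_sum) auto
    also have "\<dots> = (\<Sum>i<m. - (\<eta> * real s) * (g \<bullet> mu i) + K * (\<integral>\<omega>. (norm (a i \<omega>))\<^sup>2 \<partial>M))"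
    proof (rule sum.cong)
      fix i assume "i \<in> {..<m}"
      then have im: "i < m" by simp
      have "(\<integral>\<omega>. - (\<eta> * real s) * (g \<bullet> a i \<omega>) + K * (norm (a i \<omega>))\<^sup>2 \<partial>M)
          = (\<integral>\<omega>. - (\<eta> * real s) * (g \<bullet> a i \<omega>) \<partial>M) + (\<integral>\<omega>. K * (norm (a i \<omega>))\<^sup>2 \<partial>M)"
        using a_int[OF im] a2_int[OF im] by (intro Bochner_Integration.integral_add) auto
      also have "(\<integral>\<omega>. - (\<eta> * real s) * (g \<bullet> a i \<omega>) \<partial>M) = - (\<eta> * real s) * (g \<bullet> mu i)"
        using a_int[OF im] Ea[OF im] by simp
      finally show "(\<integral>\<omega>. - (\<eta> * real s) * (g \<bullet> a i \<omega>) + K * (norm (a i \<omega>))\<^sup>2 \<partial>M)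
          = - (\<eta> * real s) * (g \<bullet> mu i) + K * (\<integral>\<omega>. (norm (a i \<omega>))\<^sup>2 \<partial>M)" by simp
    qed simp
    finally have e: "(\<integral>\<omega>. (\<Sum>i<m. - (\<eta> * real s) * (g \<bullet> a i \<omega>) + K * (norm (a i \<omega>))\<^sup>2) \<partial>M)
        = (\<Sum>i<m. - (\<eta> * real s) * (g \<bullet> mu i) + K * (\<integral>\<omega>. (norm (a i \<omega>))\<^sup>2 \<partial>M))" .
    have "integral\<^sup>L M U = (\<integral>\<omega>. c2 / 2 * G \<partial>M) + (\<integral>\<omega>. (1 / real m) * (\<Sum>i<m. - (\<eta> * real s) * (g \<bullet> a i \<omega>) + K * (norm (a i \<omega>))\<^sup>2) \<partial>M)"
      unfolding U_def G_def using a_int a2_int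
      by (intro Bochner_Integration.integral_add integrable_mult_right Bochner_Integration.integrable_sum integrable_const) auto
    also have "\<dots> = c2 / 2 * G + (1 / real m) * (\<integral>\<omega>. (\<Sum>i<m. - (\<eta> * real s) * (g \<bullet> a i \<omega>) + K * (norm (a i \<omega>))\<^sup>2) \<partial>M)"
      by (simp add: P.prob_space)
    finally show ?thesis unfolding e .
  qed
  have EU2: "integral\<^sup>L M U \<le> c2 / 2 * G + (1 / real m) * (\<Sum>i<m. - (\<eta> * real s) * (g \<bullet> mu i) + K * ((norm (mu i))\<^sup>2 + \<sigma>\<^sup>2))"
    unfolding EU using mpos Ea2 K0 by (intro add_left_mono mult_left_mono sum_mono add_left_mono) auto
  have cong: "(\<integral>\<omega>. global_obj m D l
             (avg m (client_update xsrv (A \<omega>) (\<lambda>i. local_steps gl \<eta> i (xi i \<omega>) s (x i))))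
           - global_obj m D l (avg m x) \<partial>M) = (\<integral>\<omega>. F (nw \<omega>) - F xb \<partial>M)"
  proof (rule Bochner_Integration.integral_cong)
    fix \<omega>
    have "avg m (client_update xsrv (A \<omega>) (\<lambda>i. local_steps gl \<eta> i (xi i \<omega>) s (x i))) = nw \<omega>"
      unfolding nw_def xs_def using avg_client A_sub by blast
    then show "global_obj m D l (avg m (client_update xsrv (A \<omega>) (\<lambda>i. local_steps gl \<eta> i (xi i \<omega>) s (x i))))
           - global_obj m D l (avg m x) = F (nw \<omega>) - F xb" unfolding F_def xb_def by simp
  qed simp
  have main1: "(\<integral>\<omega>. F (nw \<omega>) - F xb \<partial>M) \<le> c2 / 2 * G + (1 / real m) * (\<Sum>i<m. - (\<eta> * real s) * (g \<bullet> mu i) + K * ((norm (mu i))\<^sup>2 + \<sigma>\<^sup>2))"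
  proof -
    have "(\<integral>\<omega>. F (nw \<omega>) - F xb \<partial>M) \<le> integral\<^sup>L M U"
      using Y_int U_int Y_up by (intro integral_mono) auto
    then show ?thesis using EU2 by linarith
  qed
  define v where "v = (\<lambda>i. gF i xb)"
  define d where "d = (\<lambda>i. norm (x i - xb))"
  define Dl where "Dl = (1 / real m) * (\<Sum>i<m. (d i)\<^sup>2)"
  have Dl0: "0 \<le> Dl" unfolding Dl_def using mpos by (simp add: sum_nonneg)
  have g_eq: "g = (1 / real m) *\<^sub>R (\<Sum>i<m. v i)" unfolding g_def gg_def global_grad_def v_def by simp
  have sumv: "(\<Sum>i<m. v i) = real m *\<^sub>R g" unfolding g_eq using mpos by simp
  have mu_v: "norm (mu i - v i) \<le> L * d i" if "i < m" for i
    unfolding mu_def v_def d_def using gF_lip[OF that] by simp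
  have D1: "(1 / real m) * (\<Sum>i<m. g \<bullet> mu i) \<ge> G / 2 - L\<^sup>2 * Dl / 2"
  proof -
    have pw: "g \<bullet> mu i \<ge> g \<bullet> v i - (G + L\<^sup>2 * (d i)\<^sup>2) / 2" if "i < m" for i
    proof -
      have e1: "g \<bullet> mu i = g \<bullet> v i + g \<bullet> (mu i - v i)" by (simp add: inner_diff_right)
      have e2: "- (g \<bullet> (mu i - v i)) \<le> norm g * norm (mu i - v i)"
        using Cauchy_Schwarz_ineq2[of g "mu i - v i"] by linarith
      have e3: "norm g * norm (mu i - v i) \<le> norm g * (L * d i)" using mu_v[OF that] by (simp add: mult_left_mono)
      have e4: "norm g * (L * d i) \<le> ((norm g)\<^sup>2 + (L * d i)\<^sup>2) / 2" by (rule ab_le)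
      have e5: "(L * d i)\<^sup>2 = L\<^sup>2 * (d i)\<^sup>2" by (simp add: power_mult_distrib)
      show ?thesis by (rule lin_help[OF e1 e2 e3 e4 e5 G_def])
    qed
    have "(\<Sum>i<m. g \<bullet> v i - (G + L\<^sup>2 * (d i)\<^sup>2) / 2) \<le> (\<Sum>i<m. g \<bullet> mu i)"
      using pw by (intro sum_mono) auto
    moreover have "(\<Sum>i<m. g \<bullet> v i - (G + L\<^sup>2 * (d i)\<^sup>2) / 2) = real m * G - (real m * G + L\<^sup>2 * (\<Sum>i<m. (d i)\<^sup>2)) / 2"
    proof -
      have "(\<Sum>i<m. g \<bullet> v i) = real m * G" unfolding G_def
        by (simp add: inner_sum_right[symmetric] sumv power2_norm_eq_inner)
      moreover have "(\<Sum>i<m. (G + L\<^sup>2 * (d i)\<^sup>2) / 2) = (real m * G + L\<^sup>2 * (\<Sum>i<m. (d i)\<^sup>2)) / 2"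
        by (simp add: sum_divide_distrib[symmetric] sum.distrib sum_distrib_left)
      ultimately show ?thesis by (simp add: sum_subtractf)
    qed
    ultimately have "real m * G - (real m * G + L\<^sup>2 * (\<Sum>i<m. (d i)\<^sup>2)) / 2 \<le> (\<Sum>i<m. g \<bullet> mu i)" by simp
    then have "(1 / real m) * (real m * G - (real m * G + L\<^sup>2 * (\<Sum>i<m. (d i)\<^sup>2)) / 2) \<le> (1 / real m) * (\<Sum>i<m. g \<bullet> mu i)"
      using mpos by (intro mult_left_mono) auto
    moreover have "(1 / real m) * (real m * G - (real m * G + L\<^sup>2 * (\<Sum>i<m. (d i)\<^sup>2)) / 2) = G / 2 - L\<^sup>2 * Dl / 2"
      unfolding Dl_def using mpos by (simp add: field_simps)
    ultimately show ?thesis by simp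
  qed
  have D2: "(1 / real m) * (\<Sum>i<m. (norm (mu i))\<^sup>2) \<le> 2 * (1 + \<beta>\<^sup>2) * G + 2 * \<zeta>\<^sup>2 + 2 * L\<^sup>2 * Dl"
  proof -
    have pw: "(norm (mu i))\<^sup>2 \<le> 2 * (norm (v i))\<^sup>2 + 2 * L\<^sup>2 * (d i)\<^sup>2" if "i < m" for i
    proof -
      have "norm (mu i) \<le> norm (v i) + L * d i"
        using norm_triangle_ineq[of "mu i - v i" "v i"] mu_v[OF that] by simp
      then have "(norm (mu i))\<^sup>2 \<le> (norm (v i) + L * d i)\<^sup>2" by (intro power_mono) auto
      also have "\<dots> \<le> 2 * (norm (v i))\<^sup>2 + 2 * (L * d i)\<^sup>2" by (rule sq_sum_le)
      finally show ?thesis by (simp add: power_mult_distrib)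
    qed
    have var: "(\<Sum>i<m. (norm (v i - g))\<^sup>2) = (\<Sum>i<m. (norm (v i))\<^sup>2) - real m * G"
    proof -
      have "(\<Sum>i<m. (norm (v i - g))\<^sup>2) = (\<Sum>i<m. (norm (v i))\<^sup>2 - 2 * (g \<bullet> v i) + G)"
        unfolding G_def by (intro sum.cong) (simp_all add: power2_norm_eq_inner inner_diff_left inner_diff_right inner_commute)
      also have "\<dots> = (\<Sum>i<m. (norm (v i))\<^sup>2) - 2 * (\<Sum>i<m. g \<bullet> v i) + real m * G"
        by (simp add: sum.distrib sum_subtractf sum_distrib_left)
      also have "(\<Sum>i<m. g \<bullet> v i) = real m * G" unfolding G_def
        by (simp add: inner_sum_right[symmetric] sumv power2_norm_eq_inner)
      finally show ?thesis by simp
    qed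
    have A4x: "(1 / real m) * (\<Sum>i<m. (norm (v i - g))\<^sup>2) \<le> \<beta>\<^sup>2 * G + \<zeta>\<^sup>2"
      using A4 unfolding v_def g_def gg_def G_def by blast
    have "(1 / real m) * (\<Sum>i<m. (norm (mu i))\<^sup>2) \<le> (1 / real m) * (\<Sum>i<m. 2 * (norm (v i))\<^sup>2 + 2 * L\<^sup>2 * (d i)\<^sup>2)"
      using pw mpos by (intro mult_left_mono sum_mono) auto
    also have "\<dots> = 2 * ((1 / real m) * (\<Sum>i<m. (norm (v i))\<^sup>2)) + 2 * L\<^sup>2 * Dl"
      unfolding Dl_def by (simp add: sum.distrib sum_distrib_left algebra_simps)
    also have "(1 / real m) * (\<Sum>i<m. (norm (v i))\<^sup>2) = G + (1 / real m) * (\<Sum>i<m. (norm (v i - g))\<^sup>2)"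
      unfolding var using mpos by (simp add: field_simps)
    finally show ?thesis using A4x by (simp add: algebra_simps)
  qed
  define X1 where "X1 = (1 / real m) * (\<Sum>i<m. g \<bullet> mu i)"
  define X2 where "X2 = (1 / real m) * (\<Sum>i<m. (norm (mu i))\<^sup>2)"
  have es0: "0 \<le> \<eta> * real s" using eta0 by simp
  have sum_eq: "(1 / real m) * (\<Sum>i<m. - (\<eta> * real s) * (g \<bullet> mu i) + K * ((norm (mu i))\<^sup>2 + \<sigma>\<^sup>2))
      = - (\<eta> * real s) * X1 + K * X2 + K * \<sigma>\<^sup>2"
  proof -
    have "(\<Sum>i<m. - (\<eta> * real s) * (g \<bullet> mu i) + K * ((norm (mu i))\<^sup>2 + \<sigma>\<^sup>2))
        = - (\<eta> * real s) * (\<Sum>i<m. g \<bullet> mu i) + K * (\<Sum>i<m. (norm (mu i))\<^sup>2) + real m * (K * \<sigma>\<^sup>2)"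
    proof -
      have "(\<Sum>i<m. - (\<eta> * real s) * (g \<bullet> mu i) + K * ((norm (mu i))\<^sup>2 + \<sigma>\<^sup>2))
          = (\<Sum>i<m. (- (\<eta> * real s) * (g \<bullet> mu i) + K * (norm (mu i))\<^sup>2) + K * \<sigma>\<^sup>2)"
        by (rule sum.cong) (simp_all add: distrib_left)
      also have "\<dots> = (\<Sum>i<m. - (\<eta> * real s) * (g \<bullet> mu i)) + (\<Sum>i<m. K * (norm (mu i))\<^sup>2) + real m * (K * \<sigma>\<^sup>2)"
        by (simp only: sum.distrib sum_constant card_lessThan)
      also have "\<dots> = - (\<eta> * real s) * (\<Sum>i<m. g \<bullet> mu i) + K * (\<Sum>i<m. (norm (mu i))\<^sup>2) + real m * (K * \<sigma>\<^sup>2)"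
        by (simp only: sum_distrib_left[symmetric])
      finally show ?thesis .
    qed
    then show ?thesis unfolding X1_def X2_def using mpos by (simp add: field_simps)
  qed
  have b1: "- (\<eta> * real s) * X1 \<le> - (\<eta> * real s) * (G / 2 - L\<^sup>2 * Dl / 2)"
  proof -
    have D1x: "G / 2 - L\<^sup>2 * Dl / 2 \<le> X1" using D1 unfolding X1_def by simp
    have "\<eta> * real s * (G / 2 - L\<^sup>2 * Dl / 2) \<le> \<eta> * real s * X1" by (rule mult_left_mono[OF D1x es0])
    then show ?thesis by (simp only: mult_minus_left neg_le_iff_le)
  qed
  have b2: "K * X2 \<le> K * (2 * (1 + \<beta>\<^sup>2) * G + 2 * \<zeta>\<^sup>2 + 2 * L\<^sup>2 * Dl)"
    using D2 K0 unfolding X2_def by (rule mult_left_mono)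
  have tot: "(\<integral>\<omega>. F (nw \<omega>) - F xb \<partial>M) \<le> - (\<eta> * real s) * G / 2 + \<eta> * real s * L\<^sup>2 * Dl / 2 + c2 * G / 2
         + K * (2 * (1 + \<beta>\<^sup>2) * G + 2 * \<zeta>\<^sup>2 + 2 * L\<^sup>2 * Dl + \<sigma>\<^sup>2)"
  proof -
    have "(\<integral>\<omega>. F (nw \<omega>) - F xb \<partial>M) \<le> c2 / 2 * G + (- (\<eta> * real s) * X1 + K * X2 + K * \<sigma>\<^sup>2)"
      using main1 sum_eq by simp
    also have "\<dots> \<le> c2 / 2 * G + (- (\<eta> * real s) * (G / 2 - L\<^sup>2 * Dl / 2) + K * (2 * (1 + \<beta>\<^sup>2) * G + 2 * \<zeta>\<^sup>2 + 2 * L\<^sup>2 * Dl) + K * \<sigma>\<^sup>2)"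
      using b1 b2 by linarith
    also have "\<dots> = - (\<eta> * real s) * G / 2 + \<eta> * real s * L\<^sup>2 * Dl / 2 + c2 * G / 2
         + K * (2 * (1 + \<beta>\<^sup>2) * G + 2 * \<zeta>\<^sup>2 + 2 * L\<^sup>2 * Dl + \<sigma>\<^sup>2)"
      by (simp add: algebra_simps)
    finally show ?thesis .
  qed
  have Kb: "K \<le> 21 / 10 * (\<eta> * real s * (\<eta> * L * real s))"
  proof -
    define dd where "dd = \<eta> * L * real s"
    have dd0: "0 \<le> dd" unfolding dd_def using eta0 L0 by simp
    have Keq: "K = \<eta> * real s * dd * (1 + (1 + 2 * dd)\<^sup>2)"
      unfolding K_def c2_def dd_def by (simp add: power2_eq_square algebra_simps)
    have "(1 + 2 * dd)\<^sup>2 \<le> (1 + 2 * (1 / 108))\<^sup>2"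
      using d_small dd0 unfolding dd_def by (intro power_mono) auto
    also have "\<dots> \<le> 11 / 10" by (simp add: power2_eq_square)
    finally have "1 + (1 + 2 * dd)\<^sup>2 \<le> 21 / 10" by simp
    then have "\<eta> * real s * dd * (1 + (1 + 2 * dd)\<^sup>2) \<le> \<eta> * real s * dd * (21 / 10)"
      using es0 dd0 by (intro mult_left_mono) auto
    then show ?thesis unfolding Keq dd_def by (simp add: mult_ac)
  qed
  have fin: "- (\<eta> * real s) * G / 2 + \<eta> * real s * L\<^sup>2 * Dl / 2 + c2 * G / 2
         + K * (2 * (1 + \<beta>\<^sup>2) * G + 2 * \<zeta>\<^sup>2 + 2 * L\<^sup>2 * Dl + \<sigma>\<^sup>2)
       \<le> - (\<eta> * real s / 3) * G + \<eta> * real s * L\<^sup>2 * Dl + 6 * \<eta>\<^sup>2 * (real s)\<^sup>2 * L * (\<zeta>\<^sup>2 + \<sigma>\<^sup>2) * (1 + (kappa m Li \<eta> s)\<^sup>2 * L\<^sup>2)"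
    by (rule final_arith[OF eta_pos s1 L_ge _ Dl0 small c2_def K0 Kb]) (simp add: G_def)
  have rhs1: "G = (norm (global_grad m gF (avg m x)))\<^sup>2" unfolding G_def g_def gg_def xb_def ..
  have rhs2: "\<eta> * real s * L\<^sup>2 * Dl = \<eta> * real s * (L\<^sup>2 / real m) * (\<Sum>i<m. (norm (x i - avg m x))\<^sup>2)"
    unfolding Dl_def d_def xb_def by simp
  have "(\<integral>\<omega>. global_obj m D l
             (avg m (client_update xsrv (A \<omega>) (\<lambda>i. local_steps gl \<eta> i (xi i \<omega>) s (x i))))
           - global_obj m D l (avg m x) \<partial>M)
      \<le> - (\<eta> * real s / 3) * G + \<eta> * real s * L\<^sup>2 * Dl + 6 * \<eta>\<^sup>2 * (real s)\<^sup>2 * L * (\<zeta>\<^sup>2 + \<sigma>\<^sup>2) * (1 + (kappa m Li \<eta> s)\<^sup>2 * L\<^sup>2)"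
    unfolding cong using tot fin by linarith
  then show ?thesis unfolding rhs1 rhs2 .
qed

end
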